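(* Let $f(z)=z+\sum_{k=2}^{\infty}a_kz^k$ be analytic in $\mathbb{D}=\{z:|z|<1\}$ with $zf'(z)-f(z)=\frac12 z^2\phi(z)$ for all $z\in\mathbb{D}$, where $\phi$ is analytic in $\mathbb{D}$ and $|\phi(z)|\le1$, and let $s_n(z;f)=z+\sum_{k=2}^n a_kz^k$. Then for each $n\ge2$, \[\left|\frac{s_n'(z;f)}{f'(z)}-1\right|\le |z|^n\left(\frac{n+1}{2n}+A_n\frac{|z|}{1-|z|}\right),\qquad |z|=r<1,\] where $A_n=\dfrac{\sqrt{2r-r^2}}{2(1-r)}\bigl(n+1+\ln(n-1)+\gamma\bigr)$ and $\gamma\approx0.57722$ is the Euler–Mascheroni constant. *)

theory Defs
  imports "HOL-Complex_Analysis.Complex_Analysis"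
begin

definition taylor_coeff :: "(complex \<Rightarrow> complex) \<Rightarrow> nat \<Rightarrow> complex" where
  "taylor_coeff f k = (deriv ^^ k) f 0 / of_nat (fact k)"

definition partial_sum :: "(complex \<Rightarrow> complex) \<Rightarrow> nat \<Rightarrow> complex \<Rightarrow> complex" where
  "partial_sum f n z = z + (\<Sum>k=2..n. taylor_coeff f k * z ^ k)"

end

theory Submission
  imports Defs
begin

lemma circ_norm: "norm (circlepath 0 \<rho> x) = \<bar>\<rho>\<bar>"
  by (simp add: circlepath norm_mult)

lemma circ_cnj: "circlepath 0 \<rho> x * cnj (circlepath 0 \<rho> x) = of_real (\<rho>^2)"
  by (metis complex_norm_square circ_norm power2_abs)

lemma coeff_integral:
  fixes h :: "complex \<Rightarrow> complex"
  assumes hol: "h holomorphic_on ball 0 1" and r: "0 < \<rho>" "\<rho> < 1"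
  shows "((\<lambda>x. h (circlepath 0 \<rho> x) * cnj (circlepath 0 \<rho> x) ^ j) has_integral
           (of_real (\<rho>^(2*j)) * ((deriv^^j) h 0 / fact j))) {0..1}"
proof -
  have sub: "cball 0 \<rho> \<subseteq> ball (0::complex) 1" using r by auto
  have cont: "continuous_on (cball 0 \<rho>) h"
    using holomorphic_on_imp_continuous_on[OF hol] continuous_on_subset sub by blast
  have hol2: "h holomorphic_on ball 0 \<rho>"
    using hol holomorphic_on_subset sub ball_subset_cball by blast
  have "((\<lambda>u. h u / (u - 0) ^ Suc j) has_contour_integral ((2 * pi * \<i>) / fact j * (deriv ^^ j) h 0)) (circlepath 0 \<rho>)"
    using Cauchy_has_contour_integral_higher_derivative_circlepath[OF cont hol2, of 0 j] r by simp
  then have I: "((\<lambda>x. h (circlepath 0 \<rho> x) / (circlepath 0 \<rho> x) ^ Suc j *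
        (2 * pi * \<i> * \<rho> * exp(2 * of_real pi * \<i> * x))) has_integral ((2 * pi * \<i>) / fact j * (deriv ^^ j) h 0)) {0..1}"
    unfolding has_contour_integral vector_derivative_circlepath by simp
  define g where "g x = circlepath 0 \<rho> x" for x
  have gx: "g x = \<rho> * exp(2 * of_real pi * \<i> * x)" for x
    by (simp add: g_def circlepath)
  have gnz: "g x \<noteq> 0" for x using r by (simp add: gx)
  have eq: "h (g x) / (g x) ^ Suc j * (2 * pi * \<i> * \<rho> * exp(2 * of_real pi * \<i> * x))
      = (2 * pi * \<i> / of_real (\<rho>^(2*j))) * (h (g x) * cnj (g x) ^ j)" for x
  proof -
    have c: "cnj (g x) ^ j = of_real (\<rho>^(2*j)) / g x ^ j"
    proof -
      have "cnj (g x) = of_real (\<rho>^2) / g x"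
        using circ_cnj[of \<rho> x] gnz[of x] unfolding g_def[symmetric] by (simp add: field_simps)
      then show ?thesis by (simp add: power_divide power_mult)
    qed
    have e: "2 * pi * \<i> * \<rho> * exp(2 * of_real pi * \<i> * x) = 2 * pi * \<i> * g x"
      by (simp add: gx)
    show ?thesis using r gnz[of x] unfolding c e
      by (simp add: field_simps)
  qed
  have "((\<lambda>x. (2 * pi * \<i> / of_real (\<rho>^(2*j))) * (h (g x) * cnj (g x) ^ j)) has_integral ((2 * pi * \<i>) / fact j * (deriv ^^ j) h 0)) {0..1}"
    using I unfolding g_def[symmetric] eq .
  then have "((\<lambda>x. (of_real (\<rho>^(2*j)) / (2 * pi * \<i>)) * ((2 * pi * \<i> / of_real (\<rho>^(2*j))) * (h (g x) * cnj (g x) ^ j))) has_integral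
     (of_real (\<rho>^(2*j)) / (2 * pi * \<i>)) * ((2 * pi * \<i>) / fact j * (deriv ^^ j) h 0)) {0..1}"
    by (rule has_integral_mult_right)
  then show ?thesis using r unfolding g_def by (simp add: field_simps)
qed

lemma coeff_power:
  "(deriv^^j) (\<lambda>w::complex. w^k) 0 / fact j = (if j = k then 1 else 0)"
proof -
  have "(deriv^^j) (\<lambda>w::complex. w^k) 0 = pochhammer (of_nat (Suc k - j)) j * 0^(k-j)"
    using higher_deriv_power[of j 0 k 0] by simp
  moreover have "pochhammer (of_nat (Suc k - j)) j * (0::complex)^(k-j) = (if j = k then fact j else 0)"
  proof (cases "j = k")
    case True then show ?thesis by (simp add: pochhammer_fact)
  next
    case False
    show ?thesis
    proof (cases "j < k")
      case True then show ?thesis by simp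
    next
      case False2: False
      then have "Suc k - j = 0" using False by simp
      then show ?thesis using False False2 by (simp add: pochhammer_0_left)
    qed
  qed
  ultimately show ?thesis by simp
qed

lemma prod_sum_expand: "(\<Sum>k<N. a k * g^k) * cnj (\<Sum>k<N. a k * (g::complex)^k) = (\<Sum>j<N. cnj (a j) * (\<Sum>k<N. a k * (g^k * cnj g ^ j)))"
proof -
  have "cnj (\<Sum>k<N. a k * g^k) = (\<Sum>j<N. cnj (a j) * cnj g ^ j)" by simp
  then have "(\<Sum>k<N. a k * g^k) * cnj (\<Sum>k<N. a k * (g::complex)^k) = (\<Sum>k<N. \<Sum>j<N. (a k * g^k) * (cnj (a j) * cnj g ^ j))"
    by (simp add: sum_product)
  also have "\<dots> = (\<Sum>j<N. \<Sum>k<N. (a k * g^k) * (cnj (a j) * cnj g ^ j))"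
    by (rule sum.swap)
  also have "\<dots> = (\<Sum>j<N. cnj (a j) * (\<Sum>k<N. a k * (g^k * cnj g ^ j)))"
    by (simp add: sum_distrib_left mult_ac)
  finally show ?thesis .
qed

lemma cnj_sq: "cnj z * (of_real a * z) = of_real (norm z ^ 2 * a)"
  by (simp only: of_real_mult complex_norm_square) (simp add: algebra_simps)

lemma parseval_partial:
  fixes \<phi> :: "complex \<Rightarrow> complex"
  assumes hol: "\<phi> holomorphic_on ball 0 1"
    and bd: "\<And>w. w \<in> ball 0 1 \<Longrightarrow> norm (\<phi> w) \<le> 1"
    and r: "0 < \<rho>" "\<rho> < 1"
  shows "(\<Sum>j<N. (norm (taylor_coeff \<phi> j))^2 * \<rho>^(2*j)) \<le> 1"
proof -
  define \<gamma> where "\<gamma> = circlepath 0 \<rho>"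
  define c where "c j = taylor_coeff \<phi> j" for j
  have c_def': "c j = (deriv^^j) \<phi> 0 / fact j" for j
    by (simp add: c_def taylor_coeff_def)
  define P where "P x = (\<Sum>k<N. c k * (\<gamma> x)^k)" for x
  define Sr where "Sr = (\<Sum>j<N. (norm (c j))^2 * \<rho>^(2*j))"
  have inball: "\<gamma> x \<in> ball 0 1" for x
    using r by (simp add: \<gamma>_def circ_norm)
  have inball': "norm (\<gamma> x) < 1" for x
    using r by (simp add: \<gamma>_def circ_norm)
  have contg: "continuous_on {0..1} \<gamma>"
    unfolding \<gamma>_def using path_circlepath path_def by blast
  have contphi: "continuous_on {0..1} (\<lambda>x. \<phi> (\<gamma> x))"
    by (rule continuous_on_compose2[OF holomorphic_on_imp_continuous_on[OF hol] contg]) (auto simp: inball inball')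
  have contP: "continuous_on {0..1} P"
    unfolding P_def by (intro continuous_intros contg)
  have I1: "((\<lambda>x. \<phi> (\<gamma> x) * cnj (P x)) has_integral of_real Sr) {0..1}"
  proof -
    have H: "((\<lambda>x. \<Sum>k<N. cnj (c k) * (\<phi> (\<gamma> x) * cnj (\<gamma> x) ^ k)) has_integral
           (\<Sum>k<N. cnj (c k) * (of_real (\<rho>^(2*k)) * c k))) {0..1}"
      by (rule has_integral_sum, simp, rule has_integral_mult_right,
          rule coeff_integral[OF hol r, unfolded \<gamma>_def[symmetric] c_def'[symmetric]])
    have E: "(\<lambda>x. \<Sum>k<N. cnj (c k) * (\<phi> (\<gamma> x) * cnj (\<gamma> x) ^ k)) = (\<lambda>x. \<phi> (\<gamma> x) * cnj (P x))"
      by (auto simp: P_def sum_distrib_left algebra_simps intro!: sum.cong)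
    have V: "(\<Sum>k<N. cnj (c k) * (of_real (\<rho>^(2*k)) * c k)) = of_real Sr"
      by (simp only: cnj_sq Sr_def of_real_sum)
    show ?thesis using H unfolding E V .
  qed
  have I2: "((\<lambda>x. P x * cnj (P x)) has_integral of_real Sr) {0..1}"
  proof -
    have hk: "(\<lambda>w::complex. w^k) holomorphic_on ball 0 1" for k by (intro holomorphic_intros)
    have mono: "((\<lambda>x. (\<gamma> x)^k * cnj (\<gamma> x) ^ j) has_integral
              (of_real (\<rho>^(2*j)) * (if j = k then 1 else 0))) {0..1}" for j k
      using coeff_integral[OF hk[of k] r, of j] unfolding \<gamma>_def[symmetric] coeff_power .
    have H: "((\<lambda>x. \<Sum>j<N. cnj (c j) * (\<Sum>k<N. c k * ((\<gamma> x)^k * cnj (\<gamma> x) ^ j))) has_integral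
           (\<Sum>j<N. cnj (c j) * (\<Sum>k<N. c k * (of_real (\<rho>^(2*j)) * (if j = k then 1 else 0))))) {0..1}"
      by (rule has_integral_sum, simp, rule has_integral_mult_right, rule has_integral_sum, simp,
          rule has_integral_mult_right, rule mono)
    have E: "(\<lambda>x. \<Sum>j<N. cnj (c j) * (\<Sum>k<N. c k * ((\<gamma> x)^k * cnj (\<gamma> x) ^ j))) = (\<lambda>x. P x * cnj (P x))"
      by (rule ext) (simp only: P_def prod_sum_expand)
    have V: "(\<Sum>j<N. cnj (c j) * (\<Sum>k<N. c k * (of_real (\<rho>^(2*j)) * (if j = k then 1 else 0)))) = of_real Sr"
    proof -
      have inner: "(\<Sum>k<N. c k * (of_real (\<rho>^(2*j)) * (if j = k then 1 else 0))) = of_real (\<rho>^(2*j)) * c j"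
        if "j < N" for j
      proof -
        have "(\<Sum>k<N. c k * (of_real (\<rho>^(2*j)) * (if j = k then 1 else 0))) =
              (\<Sum>k<N. if k = j then of_real (\<rho>^(2*j)) * c j else 0)"
          by (rule sum.cong) auto
        then show ?thesis using that by simp
      qed
      have "(\<Sum>j<N. cnj (c j) * (\<Sum>k<N. c k * (of_real (\<rho>^(2*j)) * (if j = k then 1 else 0))))
           = (\<Sum>j<N. cnj (c j) * (of_real (\<rho>^(2*j)) * c j))"
        by (rule sum.cong[OF refl], subst inner, simp_all)
      also have "\<dots> = of_real Sr" by (simp only: cnj_sq Sr_def of_real_sum)
      finally show ?thesis .
    qed
    show ?thesis using H unfolding E V .
  qed
  have I3: "((\<lambda>x. cnj (\<phi> (\<gamma> x)) * P x) has_integral of_real Sr) {0..1}"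
  proof -
    have "((cnj \<circ> (\<lambda>x. \<phi> (\<gamma> x) * cnj (P x))) has_integral cnj (of_real Sr)) {0..1}"
      by (simp only: has_integral_cnj I1)
    moreover have "(cnj \<circ> (\<lambda>x. \<phi> (\<gamma> x) * cnj (P x))) = (\<lambda>x. cnj (\<phi> (\<gamma> x)) * P x)"
      by (rule ext) simp
    ultimately show ?thesis by simp
  qed
  define A where "A x = (norm (\<phi> (\<gamma> x)))^2" for x
  define B where "B x = (norm (\<phi> (\<gamma> x) - P x))^2" for x
  have intA: "A integrable_on {0..1}"
    unfolding A_def by (intro integrable_continuous_interval continuous_intros contphi)
  have intB: "B integrable_on {0..1}"
    unfolding B_def by (intro integrable_continuous_interval continuous_intros contphi contP)
  have IA: "integral {0..1} A \<le> 1"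
  proof -
    have "integral {0..1} A \<le> integral {0..1} (\<lambda>x::real. 1::real)"
      by (rule integral_le[OF intA]) (auto intro!: power_le_one simp: A_def bd[OF inball])
    then show ?thesis by simp
  qed
  have IB: "integral {0..1} B \<ge> 0"
    by (rule integral_nonneg[OF intB]) (simp add: B_def)
  have hA: "((\<lambda>x. of_real (A x) :: complex) has_integral of_real (integral {0..1} A)) {0..1}"
    using has_integral_linear[OF integrable_integral[OF intA] bounded_linear_of_real] by (simp add: o_def)
  have hB: "((\<lambda>x. of_real (B x) :: complex) has_integral of_real (integral {0..1} B)) {0..1}"
    using has_integral_linear[OF integrable_integral[OF intB] bounded_linear_of_real] by (simp add: o_def)
  have Beq: "(of_real (B x) :: complex) = of_real (A x) - \<phi> (\<gamma> x) * cnj (P x) - cnj (\<phi> (\<gamma> x)) * P x + P x * cnj (P x)" for x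
    unfolding A_def B_def complex_norm_square by (simp add: algebra_simps)
  have "((\<lambda>x. of_real (B x) :: complex) has_integral
         (of_real (integral {0..1} A) - of_real Sr - of_real Sr + of_real Sr)) {0..1}"
    unfolding Beq by (intro has_integral_add has_integral_diff hA I1 I2 I3)
  then have "(of_real (integral {0..1} B) :: complex) = of_real (integral {0..1} A) - of_real Sr"
    using has_integral_unique[OF hB] by simp
  then have "integral {0..1} B = integral {0..1} A - Sr"
    by (metis of_real_diff of_real_eq_iff)
  then have "Sr \<le> 1" using IA IB by linarith
  then show ?thesis by (simp add: Sr_def c_def)
qed

lemma coeff_rel:
  fixes f \<phi> :: "complex \<Rightarrow> complex"
  assumes holf: "f holomorphic_on ball 0 1"
    and hol\<phi>: "\<phi> holomorphic_on ball 0 1"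
    and eq: "\<And>w. w \<in> ball 0 1 \<Longrightarrow> w * deriv f w - f w = w ^ 2 * \<phi> w / 2"
  shows "of_nat (m+1) * taylor_coeff f (m+2) = taylor_coeff \<phi> m / 2"
proof -
  define S where "S = ball (0::complex) 1"
  have oS: "open S" and z0: "0 \<in> S" by (auto simp: S_def)
  have hf: "f holomorphic_on S" using holf by (simp add: S_def)
  have hp: "\<phi> holomorphic_on S" using hol\<phi> by (simp add: S_def)
  have hf': "deriv f holomorphic_on S" using hf oS by (rule holomorphic_deriv)
  have hid: "(\<lambda>w. w) holomorphic_on S" by (intro holomorphic_intros)
  have hsq: "(\<lambda>w. w^2) holomorphic_on S" by (intro holomorphic_intros)
  have h1: "(\<lambda>w. w * deriv f w) holomorphic_on S" by (intro holomorphic_intros hf')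
  have h2: "(\<lambda>w. w^2 * \<phi> w) holomorphic_on S" by (intro holomorphic_intros hp)
  let ?k = "m+2"
  have "(deriv^^?k) (\<lambda>w. w * deriv f w - f w) 0 = (deriv^^?k) (\<lambda>w. (1/2) * (w^2 * \<phi> w)) 0"
    by (rule higher_deriv_transform_within_open[OF _ _ oS z0])
       (auto intro!: holomorphic_intros hf hf' hp holf hol\<phi> holomorphic_deriv simp: eq S_def)
  also have "\<dots> = (1/2) * (deriv^^?k) (\<lambda>w. w^2 * \<phi> w) 0"
    by (rule higher_deriv_cmult[OF h2 z0 oS])
  also have "(deriv^^?k) (\<lambda>w. w^2 * \<phi> w) 0 =
     (\<Sum>i = 0..?k. of_nat (?k choose i) * (deriv ^^ i) (\<lambda>w. w^2) 0 * (deriv ^^ (?k-i)) \<phi> 0)"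
    by (rule higher_deriv_mult[OF hsq hp oS z0])
  also have "\<dots> = (\<Sum>i = 0..?k. if i = 2 then of_nat (?k choose 2) * 2 * (deriv ^^ m) \<phi> 0 else 0)"
  proof (rule sum.cong[OF refl])
    fix i assume "i \<in> {0..?k}"
    have "(deriv ^^ i) (\<lambda>w::complex. w^2) 0 = (if i = 2 then 2 else 0)"
      using coeff_power[of i 2] by (auto simp: field_simps split: if_splits)
    then show "of_nat (?k choose i) * (deriv ^^ i) (\<lambda>w. w^2) 0 * (deriv ^^ (?k-i)) \<phi> 0 =
       (if i = 2 then of_nat (?k choose 2) * 2 * (deriv ^^ m) \<phi> 0 else 0)" by auto
  qed
  also have "\<dots> = of_nat (?k choose 2) * 2 * (deriv ^^ m) \<phi> 0" by simp
  finally have R: "(deriv^^?k) (\<lambda>w. w * deriv f w - f w) 0 = of_nat (?k choose 2) * (deriv ^^ m) \<phi> 0"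
    by simp
  have "(deriv^^?k) (\<lambda>w. w * deriv f w - f w) 0 = (deriv^^?k) (\<lambda>w. w * deriv f w) 0 - (deriv^^?k) f 0"
    by (rule higher_deriv_diff[OF h1 hf oS z0])
  also have "(deriv^^?k) (\<lambda>w. w * deriv f w) 0 =
     (\<Sum>i = 0..?k. of_nat (?k choose i) * (deriv ^^ i) (\<lambda>w. w) 0 * (deriv ^^ (?k-i)) (deriv f) 0)"
    by (rule higher_deriv_mult[OF hid hf' oS z0])
  also have "\<dots> = (\<Sum>i = 0..?k. if i = 1 then of_nat ?k * (deriv ^^ (m+1)) (deriv f) 0 else 0)"
    by (rule sum.cong[OF refl]) auto
  also have "\<dots> = of_nat ?k * (deriv ^^ (m+1)) (deriv f) 0" by simp
  also have "(deriv ^^ (m+1)) (deriv f) = (deriv ^^ ?k) f"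
    by (simp add: funpow_Suc_right del: funpow.simps)
  finally have L: "(deriv^^?k) (\<lambda>w. w * deriv f w - f w) 0 = of_nat (m+1) * (deriv ^^ ?k) f 0"
    by (simp add: algebra_simps)
  from L R have key: "of_nat (m+1) * (deriv ^^ ?k) f 0 = of_nat (?k choose 2) * (deriv ^^ m) \<phi> 0"
    by simp
  have ch: "(?k choose 2) * 2 = (m+2)*(m+1)"
    by (simp add: choose_two)
  have fk: "(fact ?k :: complex) = of_nat ((m+2)*(m+1)) * fact m"
    by (simp add: algebra_simps)
  have Cpos: "(of_nat (?k choose 2) :: complex) \<noteq> 0" by simp
  have "of_nat (m+1) * taylor_coeff f ?k = of_nat (m+1) * (deriv ^^ ?k) f 0 / fact ?k"
    by (simp only: taylor_coeff_def of_nat_fact times_divide_eq_right)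
  also have "\<dots> = of_nat (?k choose 2) * (deriv ^^ m) \<phi> 0 / fact ?k" by (simp only: key)
  also have "\<dots> = of_nat (?k choose 2) * (deriv ^^ m) \<phi> 0 / (of_nat ((?k choose 2) * 2) * fact m)"
    by (simp only: fk ch)
  also have "\<dots> = (deriv ^^ m) \<phi> 0 / fact m / 2"
    using Cpos by (simp add: field_simps)
  also have "\<dots> = taylor_coeff \<phi> m / 2" by (simp only: taylor_coeff_def of_nat_fact)
  finally show ?thesis .
qed

lemma fprime_bound:
  fixes f \<phi> :: "complex \<Rightarrow> complex"
  assumes holf: "f holomorphic_on ball 0 1"
    and f0: "f 0 = 0" and f'0: "deriv f 0 = 1"
    and bd\<phi>: "\<And>w. w \<in> ball 0 1 \<Longrightarrow> norm (\<phi> w) \<le> 1"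
    and eq: "\<And>w. w \<in> ball 0 1 \<Longrightarrow> w * deriv f w - f w = w ^ 2 * \<phi> w / 2"
    and z: "norm z < 1"
  shows "norm (deriv f z - 1) \<le> norm z"
proof -
  define S where "S = ball (0::complex) 1"
  have oS: "open S" and z0: "0 \<in> S" and cS: "convex S" and zS: "z \<in> S"
    using z by (auto simp: S_def)
  define F where "F = (\<lambda>w. if w = 0 then deriv f 0 else (f w - f 0) / (w - 0))"
  have hF: "F holomorphic_on S"
    unfolding F_def by (rule pole_lemma) (use holf oS z0 in \<open>auto simp: S_def interior_open\<close>)
  have dF: "deriv F w = \<phi> w / 2" if w: "w \<in> S" "w \<noteq> 0" for w
  proof -
    have fd: "(f has_field_derivative deriv f w) (at w)"
      using holomorphic_derivI[OF holf _ w(1)[unfolded S_def]] by simp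
    have "((\<lambda>u. f u / u) has_field_derivative (deriv f w * w - f w * 1) / (w * w)) (at w)"
      by (rule DERIV_divide[OF fd DERIV_ident w(2)])
    then have "(F has_field_derivative (deriv f w * w - f w * 1) / (w * w)) (at w)"
      by (rule has_field_derivative_transform_within_open[of _ _ _ "S - {0}"])
         (use oS w in \<open>auto simp: F_def f0\<close>)
    moreover have "(deriv f w * w - f w * 1) / (w * w) = \<phi> w / 2"
      using eq[of w] w by (auto simp: S_def field_simps power2_eq_square)
    ultimately show ?thesis by (simp add: DERIV_imp_deriv)
  qed
  have bdd: "norm (deriv F w) \<le> 1/2" if w: "w \<in> S" for w
  proof (cases "w = 0")
    case False
    have "norm (deriv F w) = norm (\<phi> w) / 2" unfolding dF[OF w False] by (simp add: norm_divide)
    then show ?thesis using bd\<phi>[of w] w by (simp add: S_def)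
  next
    case True
    have hdF: "deriv F holomorphic_on S" using hF oS by (rule holomorphic_deriv)
    have "isCont (deriv F) 0"
      using holomorphic_on_imp_continuous_on[OF hdF] oS z0 continuous_on_eq_continuous_at by blast
    then have lim: "(deriv F \<longlongrightarrow> deriv F 0) (at 0)" by (simp add: isCont_def)
    have ev: "eventually (\<lambda>u. norm (deriv F u) \<le> 1/2) (at 0)"
    proof -
      have "eventually (\<lambda>u. u \<in> S) (at 0)"
        using oS z0 by (rule eventually_at_in_open')
      then show ?thesis
        by (auto simp: eventually_at_filter elim!: eventually_mono
                 simp add: dF S_def norm_divide bd\<phi>)
    qed
    have "norm (deriv F 0) \<le> 1/2"
      by (rule Lim_norm_ubound[OF _ lim ev]) simp
    then show ?thesis using True by simp
  qed
  have "norm (F z - F 0) \<le> 1/2 * norm (z - 0)"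
    by (rule field_differentiable_bound[OF cS _ _ zS z0, of _ "deriv F"])
       (use holomorphic_derivI[OF hF oS] bdd in auto)
  then have Fz: "norm (F z - 1) \<le> norm z / 2" by (simp add: F_def f'0)
  show ?thesis
  proof (cases "z = 0")
    case True then show ?thesis by (simp add: f'0)
  next
    case False
    have "deriv f z = F z + z * \<phi> z / 2"
      using eq[of z] zS False by (auto simp: F_def S_def f0 field_simps power2_eq_square)
    then have "deriv f z - 1 = (F z - 1) + z * \<phi> z / 2" by simp
    then have "norm (deriv f z - 1) \<le> norm (F z - 1) + norm (z * \<phi> z / 2)"
      by (metis norm_triangle_ineq)
    also have "norm (z * \<phi> z / 2) \<le> norm z / 2"
      using bd\<phi>[of z] zS by (simp add: S_def norm_mult norm_divide mult_left_le)
    finally show ?thesis using Fz by simp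
  qed
qed

lemma parseval_full:
  fixes \<phi> :: "complex \<Rightarrow> complex"
  assumes hol: "\<phi> holomorphic_on ball 0 1"
    and bd: "\<And>w. w \<in> ball 0 1 \<Longrightarrow> norm (\<phi> w) \<le> 1"
  shows "(\<Sum>j<N. (norm (taylor_coeff \<phi> j))^2) \<le> 1"
proof -
  let ?g = "\<lambda>\<rho>::real. \<Sum>j<N. (norm (taylor_coeff \<phi> j))^2 * \<rho>^(2*j)"
  have lim: "(?g \<longlongrightarrow> ?g 1) (at_left 1)" by (intro tendsto_intros)
  have ev: "eventually (\<lambda>\<rho>. ?g \<rho> \<le> 1) (at_left (1::real))"
    using eventually_at_left_real[of 0 "1::real"]
    by (auto elim!: eventually_mono intro: parseval_partial[OF hol bd])
  have "?g 1 \<le> 1" by (rule tendsto_upperbound[OF lim ev]) simp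
  then show ?thesis by simp
qed

lemma sum_split_add:
  fixes g :: "nat \<Rightarrow> 'a::comm_monoid_add" and N p :: nat
  shows "(\<Sum>j<N+p. g j) = (\<Sum>j<p. g j) + (\<Sum>j<N. g (j+p))"
  by (induction N) (simp_all add: add.commute add.left_commute)

lemma cs_tail:
  fixes c :: "nat \<Rightarrow> complex"
  assumes P: "\<And>N. (\<Sum>j<N. (norm (c j))^2) \<le> 1" and p: "p \<ge> 1" and r: "0 \<le> r" "r < 1"
  shows "summable (\<lambda>j. norm (c (j+p)) * r^(j+p))"
    and "(\<Sum>j. norm (c (j+p)) * r^(j+p)) \<le> sqrt (1 - (norm (c 0))^2) * r^p / sqrt (1 - r^2)"
proof -
  define B where "B = sqrt (1 - (norm (c 0))^2) * r^p / sqrt (1 - r^2)"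
  have t1: "(norm (c 0))^2 \<le> 1" using P[of 1] by simp
  have r2: "r^2 < 1" using r by (simp add: power_less_one_iff abs_square_less_1)
  have part: "(\<Sum>j<N. norm (c (j+p)) * r^(j+p)) \<le> B" for N
  proof -
    have c1: "(\<Sum>j<N. (norm (c (j+p)))^2) \<le> 1 - (norm (c 0))^2"
    proof -
      have "(norm (c 0))^2 \<le> (\<Sum>j<p. (norm (c j))^2)"
        using p by (intro member_le_sum[of 0 "{..<p}" "\<lambda>j. (norm (c j))^2", simplified]) auto
      then have "(norm (c 0))^2 + (\<Sum>j<N. (norm (c (j+p)))^2) \<le> (\<Sum>j<N+p. (norm (c j))^2)"
        by (simp add: sum_split_add)
      then show ?thesis using P[of "N+p"] by linarith
    qed
    have g: "(\<Sum>j<N. (r^(j+p))^2) \<le> r^(2*p) / (1 - r^2)"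
    proof -
      have "(\<Sum>j<N. (r^(j+p))^2) = r^(2*p) * (\<Sum>j<N. (r^2)^j)"
        by (simp add: sum_distrib_left power_add power_mult_distrib power_mult[symmetric] mult.commute)
      also have "(\<Sum>j<N. (r^2)^j) = (1 - (r^2)^N) / (1 - r^2)"
        using r2 by (simp add: sum_gp_strict)
      also have "\<dots> \<le> 1 / (1 - r^2)"
        using r2 by (intro divide_right_mono) auto
      finally show ?thesis using r by (simp add: mult_left_mono)
    qed
    have cs: "(\<Sum>j<N. norm (c (j+p)) * r^(j+p))^2 \<le> (\<Sum>j<N. (norm (c (j+p)))^2) * (\<Sum>j<N. (r^(j+p))^2)"
      by (rule Cauchy_Schwarz_ineq_sum)
    also have "\<dots> \<le> (1 - (norm (c 0))^2) * (r^(2*p) / (1 - r^2))"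
      using c1 g t1 r2 by (intro mult_mono) (auto intro!: sum_nonneg)
    also have "\<dots> = B^2"
      unfolding B_def using t1 r2 by (simp add: power_mult_distrib power_divide power_mult[symmetric] mult.commute)
    finally have "(\<Sum>j<N. norm (c (j+p)) * r^(j+p))^2 \<le> B^2" .
    moreover have "B \<ge> 0" unfolding B_def using t1 r2 r by simp
    ultimately show ?thesis by (rule power2_le_imp_le)
  qed
  show sm: "summable (\<lambda>j. norm (c (j+p)) * r^(j+p))"
    by (rule summableI_nonneg_bounded[OF _ part]) (use r in simp)
  show "(\<Sum>j. norm (c (j+p)) * r^(j+p)) \<le> sqrt (1 - (norm (c 0))^2) * r^p / sqrt (1 - r^2)"
    using suminf_le_const[OF sm part] by (simp add: B_def)
qed

lemma final_ineq:
  fixes r t u K M :: real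
  assumes r: "0 \<le> r" "r < 1" and t: "0 \<le> t" and u: "0 \<le> u" and tu: "t^2 + u^2 \<le> 1"
    and K: "0 < K" "K \<le> 3/4" and M: "3/2 \<le> M"
  shows "K * (u / sqrt (1 - r^2)) * (1 + (t * r + 3/4 * r * (u * r / sqrt (1 - r^2))) / (1 - r))
         \<le> K + sqrt (2 * r - r^2) * M * r / (1 - r)^2"
proof -
  define q where "q = sqrt (1 - r^2)"
  define s where "s = sqrt (2 * r - r^2)"
  define m where "m = sqrt ((1 - r)^2 + r^2)"
  define d where "d = 1 - r"
  have d: "0 < d" "d \<le> 1" using r by (auto simp: d_def)
  have rr: "r * r \<le> r" using r by (simp add: mult_left_le_one_le)
  have rr2: "r^2 \<le> r" using rr by (simp add: power2_eq_square)
  have q2: "q^2 = 1 - r^2" unfolding q_def using r by (simp add: abs_square_le_1 power_le_one)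
  have qpos: "q > 0" unfolding q_def using r by (simp add: power_less_one_iff abs_square_less_1)
  have s2: "s^2 = 2 * r - r^2"
  proof -
    have "r * r \<le> r" using r by (simp add: mult_left_le_one_le)
    then have "0 \<le> 2 * r - r^2" using r by (simp add: power2_eq_square)
    then show ?thesis unfolding s_def by simp
  qed
  have s0: "s \<ge> 0" unfolding s_def using rr2 r by simp
  have sr: "r \<le> s" unfolding s_def using rr2 by (intro real_le_rsqrt) linarith
  have m2: "m^2 = (1 - r)^2 + r^2" unfolding m_def by simp
  have m0: "m \<ge> 0" unfolding m_def by simp
  have u2: "u^2 \<le> 1 - t^2" using tu by simp
  have u1: "u \<le> 1" using tu t u by (smt (verit) power2_le_imp_le zero_le_power2 one_power2)
  have st1: "u * (d + t * r) \<le> m"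
  proof -
    have e: "d^2 + r^2 - (1 - t^2) * (d + r * t)^2 = (r * (1 - t^2) - t * d)^2 + r^2 * t^2"
      by (simp add: power2_eq_square algebra_simps)
    have "(u * (d + t * r))^2 = u^2 * (d + r * t)^2" by (simp add: power2_eq_square algebra_simps)
    also have "\<dots> \<le> (1 - t^2) * (d + r * t)^2" using u2 by (intro mult_right_mono) auto
    also have "\<dots> \<le> d^2 + r^2" using e by (smt (verit) zero_le_power2 mult_nonneg_nonneg)
    finally show ?thesis unfolding m_def d_def by (intro real_le_rsqrt) simp
  qed
  have st2: "m * d \<le> (d^2 + r * s) * q"
  proof (rule power2_le_imp_le)
    show "0 \<le> (d^2 + r * s) * q" using qpos s0 r by simp
    have poly: "d * (d^2 + r^2) \<le> (2 - d) * (d^4 + 2 * d^2 * r^2 + r^2 * (2*r - r^2))"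
    proof -
      have "(2 - d) * (d^4 + 2 * d^2 * r^2 + r^2 * (2*r - r^2)) - d * (d^2 + r^2) = 2 * r^3 * (2 - 2*r + r^2)"
        unfolding d_def by (simp add: power2_eq_square power3_eq_cube power4_eq_xxxx algebra_simps)
      moreover have "2 * r^3 * (2 - 2*r + r^2) \<ge> 0" using r by (simp add: power2_eq_square)
      ultimately show ?thesis by linarith
    qed
    have "(m * d)^2 = (d^2 + r^2) * d^2" by (simp add: power_mult_distrib m2 d_def)
    also have "\<dots> = d * (d * (d^2 + r^2))" by (simp add: power2_eq_square)
    also have "\<dots> \<le> d * ((2 - d) * (d^4 + 2 * d^2 * r^2 + r^2 * (2*r - r^2)))"
      using poly d by (intro mult_left_mono) auto
    also have "\<dots> = q^2 * (d^4 + 2 * d^2 * r^2 + r^2 * s^2)"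
      unfolding q2 s2 d_def by (simp add: power2_eq_square algebra_simps)
    also have "\<dots> \<le> q^2 * (d^2 + r * s)^2"
    proof (intro mult_left_mono)
      have "d^2 * r^2 \<le> d^2 * (r * s)" using sr r by (simp add: power2_eq_square mult_left_mono)
      then show "d^4 + 2 * d^2 * r^2 + r^2 * s^2 \<le> (d^2 + r * s)^2"
        by (simp add: power2_eq_square power4_eq_xxxx algebra_simps)
    qed simp
    also have "\<dots> = ((d^2 + r * s) * q)^2" by (simp add: power_mult_distrib)
    finally show "(m * d)^2 \<le> ((d^2 + r * s) * q)^2" .
  qed
  have A: "u / q * ((d + t * r) / d) \<le> 1 + r * s / d^2"
  proof -
    have "u / q * ((d + t * r) / d) = u * (d + t * r) / (q * d)" by simp
    also have "\<dots> \<le> m / (q * d)" using st1 qpos d by (intro divide_right_mono) auto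
    also have "\<dots> \<le> (d^2 + r * s) / d^2"
      using st2 qpos d by (simp add: divide_simps power2_eq_square)
    also have "\<dots> = 1 + r * s / d^2" using d by (simp add: field_simps)
    finally show ?thesis .
  qed
  have B: "u / q * (3/4 * r * (u * r / q) / d) \<le> 3/4 * (r * s / d^2)"
  proof -
    have "u / q * (3/4 * r * (u * r / q) / d) = 3/4 * (u^2 * r^2 / (q^2 * d))"
      by (simp add: power2_eq_square mult_ac)
    also have "\<dots> \<le> 3/4 * (r^2 / (q^2 * d))"
      using u1 u qpos d by (intro mult_left_mono divide_right_mono) (auto simp: power_le_one mult_left_le_one_le)
    also have "r^2 / (q^2 * d) = r^2 / ((1 + r) * d^2)"
    proof -
      have den: "q^2 * d = (1 + r) * d^2" unfolding q2 d_def by (simp add: power2_eq_square algebra_simps)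
      show ?thesis by (simp only: den)
    qed
    also have "\<dots> \<le> r * s / d^2"
    proof -
      have "r^2 \<le> r * s" using sr r by (simp add: power2_eq_square mult_left_mono)
      also have "r * s \<le> (1 + r) * (r * s)" using sr r s0 by (simp add: algebra_simps)
      finally have "r^2 / ((1 + r) * d^2) \<le> (1 + r) * (r * s) / ((1 + r) * d^2)"
        using d r by (intro divide_right_mono) auto
      then show ?thesis using r by simp
    qed
    finally show ?thesis by simp
  qed
  have W: "(u / q) * (1 + (t * r + 3/4 * r * (u * r / q)) / d) \<le> 1 + 7/4 * (r * s / d^2)"
  proof -
    have "(u / q) * (1 + (t * r + 3/4 * r * (u * r / q)) / d) =
          u / q * ((d + t * r) / d) + u / q * (3/4 * r * (u * r / q) / d)"
      using d qpos by (simp add: field_simps)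
    then show ?thesis using A B by linarith
  qed
  have rs0: "0 \<le> r * s / d^2" using r s0 by simp
  have "K * (u / q) * (1 + (t * r + 3/4 * r * (u * r / q)) / d) \<le> K * (1 + 7/4 * (r * s / d^2))"
    by (metis mult.assoc mult_left_mono W less_imp_le K(1))
  also have "\<dots> \<le> K + M * (r * s / d^2)"
  proof -
    have "K * (7/4) \<le> M" using K M by linarith
    then have "K * (7/4) * (r * s / d^2) \<le> M * (r * s / d^2)" using rs0 by (rule mult_right_mono)
    then show ?thesis by (simp add: algebra_simps)
  qed
  finally show ?thesis unfolding q_def[symmetric] s_def[symmetric] d_def[symmetric]
    by (simp add: mult.commute mult.left_commute)
qed

lemma tail_bound:
  fixes b c :: "nat \<Rightarrow> complex"
  assumes S: "(\<lambda>j. b j * z^j) sums L"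
    and nb: "\<And>j. j \<ge> 1 \<Longrightarrow> norm (b j) = (real j + 1) / (2 * real j) * norm (c (j - 1))"
    and sm: "summable (\<lambda>j. norm (c (j + (p-1))) * norm z^(j + (p-1)))"
    and p: "p \<ge> 1"
  shows "norm (L - (\<Sum>j<p. b j * z^j)) \<le>
         (real p + 1) / (2 * real p) * norm z * (\<Sum>j. norm (c (j + (p-1))) * norm z^(j + (p-1)))"
proof -
  have S2: "(\<lambda>j. b (j+p) * z^(j+p)) sums (L - (\<Sum>j<p. b j * z^j))"
    by (rule sums_split_initial_segment[OF S])
  define K where "K = (real p + 1) / (2 * real p)"
  define h where "h j = K * norm z * (norm (c (j + (p-1))) * norm z^(j + (p-1)))" for j
  have le: "norm (b (j+p) * z^(j+p)) \<le> h j" for j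
  proof -
    define A where "A = (real (j+p) + 1) / (2 * real (j+p))"
    define C where "C = norm (c (j + (p-1)))"
    define R where "R = norm z^(j + (p-1))"
    have pp: "real p > 0" using p by simp
    have e1: "norm (b (j+p)) = A * C"
      using nb[of "j+p"] p by (simp add: A_def C_def)
    have jp: "j + p = Suc (j + (p-1))" using p by simp
    have e2: "norm (z^(j+p)) = norm z * R"
      unfolding R_def norm_power by (subst jp) (simp only: power_Suc)
    have A1: "A = 1/2 + 1/(2 * real (j+p))" unfolding A_def using pp by (simp add: field_simps)
    have K1: "K = 1/2 + 1/(2 * real p)" unfolding K_def using pp by (simp add: field_simps)
    have "1/(2 * real (j+p)) \<le> 1/(2 * real p)"
      using pp by (intro divide_left_mono) auto
    then have AK: "A \<le> K" unfolding A1 K1 by simp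
    have "norm (b (j+p) * z^(j+p)) = A * C * (norm z * R)"
      by (simp only: norm_mult e1 e2)
    also have "\<dots> \<le> K * C * (norm z * R)"
      using AK by (intro mult_right_mono) (auto simp: C_def R_def)
    also have "\<dots> = h j" by (simp add: h_def C_def R_def mult_ac)
    finally show ?thesis .
  qed
  have smh: "summable h" unfolding h_def by (intro summable_mult sm)
  have "norm (L - (\<Sum>j<p. b j * z^j)) = norm (\<Sum>j. b (j+p) * z^(j+p))"
    using sums_unique[OF S2] by simp
  also have "\<dots> \<le> suminf h" by (rule norm_suminf_le[OF le smh])
  also have "suminf h = K * norm z * (\<Sum>j. norm (c (j + (p-1))) * norm z^(j + (p-1)))"
    unfolding h_def by (rule suminf_mult[OF sm])
  finally show ?thesis unfolding K_def .
qed

lemma deriv_partial: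
  assumes a1: "taylor_coeff f 1 = 1" and n: "n = m + 2"
  shows "deriv (partial_sum f n) z = (\<Sum>j<n. of_nat (Suc j) * taylor_coeff f (Suc j) * z^j)"
proof -
  define a where "a = taylor_coeff f"
  have ps: "partial_sum f n = (\<lambda>w. w + (\<Sum>k=2..n. a k * w^k))"
    by (rule ext) (simp add: partial_sum_def a_def)
  have D: "(partial_sum f n has_field_derivative (1 + (\<Sum>k=2..n. a k * (of_nat k * z^(k-1))))) (at z)"
    unfolding ps by (auto intro!: derivative_eq_intros simp: mult_ac)
  define G where "G k = a k * (of_nat k * z^(k-1))" for k
  have "(\<Sum>k=2..n. a k * (of_nat k * z^(k-1))) = (\<Sum>k=2..n. G k)" by (simp only: G_def)
  also have "\<dots> = (\<Sum>k=0+2..m+2. G k)" by (simp only: n add.left_neutral)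
  also have "\<dots> = (\<Sum>i=0..m. G (i+2))" by (rule sum.shift_bounds_cl_nat_ivl)
  also have "\<dots> = (\<Sum>i=0..m. a (i+2) * (of_nat (i+2) * z^(i+2-1)))" by (simp add: G_def)
  also have "\<dots> = (\<Sum>i<Suc m. of_nat (Suc (Suc i)) * a (Suc (Suc i)) * z^(Suc i))"
    by (simp add: atLeast0AtMost lessThan_Suc_atMost[symmetric] mult_ac)
  finally have E1: "(\<Sum>k=2..n. a k * (of_nat k * z^(k-1))) = (\<Sum>i<Suc m. of_nat (Suc (Suc i)) * a (Suc (Suc i)) * z^(Suc i))" .
  have n': "n = Suc (Suc m)" using n by simp
  have E2: "(\<Sum>j<n. of_nat (Suc j) * a (Suc j) * z^j) = of_nat (Suc 0) * a (Suc 0) * z^0 + (\<Sum>i<Suc m. of_nat (Suc (Suc i)) * a (Suc (Suc i)) * z^(Suc i))"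
    unfolding n' by (rule sum.lessThan_Suc_shift)
  have E3: "of_nat (Suc 0) * a (Suc 0) * z^0 = 1" using a1 by (simp add: a_def)
  have E: "1 + (\<Sum>k=2..n. a k * (of_nat k * z^(k-1))) = (\<Sum>j<n. of_nat (Suc j) * a (Suc j) * z^j)"
    unfolding E1 E2 E3 ..
  show ?thesis using DERIV_imp_deriv[OF D] E by (simp add: a_def)
qed

theorem theorem3p1:
  fixes f \<phi> :: "complex \<Rightarrow> complex" and n :: nat and z :: complex
  assumes holf: "f holomorphic_on ball 0 1"
    and f0: "f 0 = 0" and f'0: "deriv f 0 = 1"
    and hol\<phi>: "\<phi> holomorphic_on ball 0 1"
    and bd\<phi>: "\<And>w. w \<in> ball 0 1 \<Longrightarrow> norm (\<phi> w) \<le> 1"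
    and eq: "\<And>w. w \<in> ball 0 1 \<Longrightarrow> w * deriv f w - f w = w ^ 2 * \<phi> w / 2"
    and n: "n \<ge> 2"
    and z: "norm z < 1"
  shows "norm (deriv (partial_sum f n) z / deriv f z - 1)
           \<le> norm z ^ n * ((real n + 1) / (2 * real n)
              + (sqrt (2 * norm z - norm z ^ 2) / (2 * (1 - norm z))
                  * (real n + 1 + ln (real n - 1) + euler_mascheroni))
                * (norm z / (1 - norm z)))"
proof -
  obtain m where nm: "n = m + 2" using n by (metis add.commute le_Suc_ex)
  define a where "a = taylor_coeff f"
  define c where "c = taylor_coeff \<phi>"
  define b where "b j = of_nat (Suc j) * a (Suc j)" for j
  define r where "r = norm z"
  have r0: "0 \<le> r" and r1: "r < 1" using z by (auto simp: r_def)
  have zb: "z \<in> ball 0 1" using z by simp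
  have a1: "a 1 = 1" using f'0 by (simp add: a_def taylor_coeff_def)
  have b0: "b 0 = 1" using a1 by (simp add: b_def)
  have bj: "b j = of_nat (j+1) / of_nat (2*j) * c (j-1)" if j: "j \<ge> 1" for j
  proof -
    have "of_nat (j-1+1) * taylor_coeff f (j-1+2) = taylor_coeff \<phi> (j-1) / 2"
      by (rule coeff_rel[OF holf hol\<phi> eq])
    then have "of_nat j * a (j+1) = c (j-1) / 2" using j by (simp add: a_def c_def)
    then have "a (j+1) = c (j-1) / (2 * of_nat j)" using j by (simp add: field_simps)
    then show ?thesis using j by (simp add: b_def field_simps)
  qed
  have nb: "norm (b j) = (real j + 1) / (2 * real j) * norm (c (j-1))" if j: "j \<ge> 1" for j
  proof -
    have "norm (b j) = norm (of_nat (j+1) :: complex) / norm (of_nat (2*j) :: complex) * norm (c (j-1))"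
      using bj[OF j] by (simp only: norm_mult norm_divide)
    then show ?thesis by (simp only: norm_of_nat) simp
  qed
  have S: "(\<lambda>j. b j * z^j) sums deriv f z"
  proof -
    have "(\<lambda>j. (deriv^^j) (deriv f) 0 / fact j * (z - 0)^j) sums deriv f z"
      by (rule holomorphic_power_series[OF holomorphic_deriv[OF holf open_ball] zb])
    moreover have "(deriv^^j) (deriv f) 0 / fact j = b j" for j
    proof -
      have "(deriv^^j) (deriv f) = (deriv^^(Suc j)) f" by (simp only: funpow_Suc_right o_def)
      moreover have "b j = (deriv^^(Suc j)) f 0 / fact j"
      proof -
        have nz: "(of_nat (Suc j)::complex) \<noteq> 0" by (simp only: of_nat_eq_0_iff)
        have "b j = of_nat (Suc j) * ((deriv^^(Suc j)) f 0 / (of_nat (Suc j) * fact j))"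
          by (simp only: b_def a_def taylor_coeff_def of_nat_fact fact_Suc of_nat_mult of_nat_id)
        also have "\<dots> = (deriv^^(Suc j)) f 0 / fact j"
          by (simp only: times_divide_eq_right mult_divide_mult_cancel_left[OF nz])
        finally show ?thesis .
      qed
      ultimately show ?thesis by simp
    qed
    ultimately show ?thesis by simp
  qed
  have P: "\<And>N. (\<Sum>j<N. (norm (c j))^2) \<le> 1" unfolding c_def by (rule parseval_full[OF hol\<phi> bd\<phi>])
  define t where "t = norm (c 0)"
  define u where "u = sqrt (1 - t^2)"
  define q where "q = sqrt (1 - r^2)"
  have t0: "0 \<le> t" by (simp add: t_def)
  have t1: "t^2 \<le> 1" using P[of 1] by (simp add: t_def)
  have u0: "0 \<le> u" using t1 by (simp add: u_def)
  have tu: "t^2 + u^2 \<le> 1" using t1 by (simp add: u_def)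
  have q0: "0 < q" using r0 r1 by (simp add: q_def power_less_one_iff abs_square_less_1)
  define X where "X p = (\<Sum>j. norm (c (j+p)) * r^(j+p))" for p
  have smX: "summable (\<lambda>j. norm (c (j+p)) * r^(j+p))" if "p \<ge> 1" for p
    by (rule cs_tail(1)[OF P that r0 r1])
  have bX: "X p \<le> u * r^p / q" if "p \<ge> 1" for p
    unfolding X_def u_def q_def t_def by (rule cs_tail(2)[OF P that r0 r1])
  have tail: "norm (deriv f z - (\<Sum>j<p. b j * z^j)) \<le> (real p + 1) / (2 * real p) * r * (u * r^(p-1) / q)"
    if p: "p \<ge> 2" for p
  proof -
    have "norm (deriv f z - (\<Sum>j<p. b j * z^j)) \<le> (real p + 1) / (2 * real p) * r * X (p-1)"
      unfolding X_def r_def by (rule tail_bound[OF S nb]) (use p smX[of "p-1"] in \<open>auto simp: r_def\<close>)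
    also have "\<dots> \<le> (real p + 1) / (2 * real p) * r * (u * r^(p-1) / q)"
      using bX[of "p-1"] p r0 by (intro mult_left_mono) auto
    finally show ?thesis .
  qed
  define T where "T = deriv f z - (\<Sum>j<n. b j * z^j)"
  define K where "K = (real n + 1) / (2 * real n)"
  define D where "D = t * r + 3/4 * r * (u * r / q)"
  have D0: "0 \<le> D" unfolding D_def
    by (intro add_nonneg_nonneg mult_nonneg_nonneg divide_nonneg_nonneg) (use t0 r0 u0 q0 in auto)
  have TB: "norm T \<le> K * r * (u * r^(n-1) / q)"
    unfolding T_def K_def using tail[OF n] .
  have D1: "norm (deriv f z - 1) \<le> D"
  proof -
    have b1: "b (Suc 0) = c 0" using bj[of 1] by simp
    have s2: "(\<Sum>j<2. b j * z^j) = 1 + c 0 * z" by (simp add: numeral_2_eq_2 b0 b1)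
    have "norm (deriv f z - (1 + c 0 * z)) \<le> 3/4 * r * (u * r / q)"
      using tail[of 2] by (simp add: s2)
    moreover have "norm (c 0 * z) = t * r" by (simp add: t_def r_def norm_mult)
    moreover have "norm (deriv f z - 1) \<le> norm (deriv f z - (1 + c 0 * z)) + norm (c 0 * z)"
    proof -
      have "deriv f z - 1 = (deriv f z - (1 + c 0 * z)) + c 0 * z" by simp
      then show ?thesis by (metis norm_triangle_ineq)
    qed
    ultimately show ?thesis unfolding D_def by linarith
  qed
  have FB: "norm (deriv f z - 1) \<le> r"
    unfolding r_def by (rule fprime_bound[OF holf f0 f'0 bd\<phi> eq z])
  have Fpos: "norm (deriv f z) \<ge> 1 - r"
    using FB norm_triangle_ineq2[of 1 "deriv f z"] by (simp add: norm_minus_commute)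
  have Fnz: "deriv f z \<noteq> 0" using Fpos r1 by auto
  have dps: "deriv (partial_sum f n) z = (\<Sum>j<n. b j * z^j)"
    using deriv_partial[of f n m z] a1 nm by (simp add: a_def b_def)
  have eq1: "norm (deriv (partial_sum f n) z / deriv f z - 1) = norm T / norm (deriv f z)"
  proof -
    have "deriv (partial_sum f n) z / deriv f z - 1 = - T / deriv f z"
      using Fnz by (simp add: dps T_def field_simps)
    then show ?thesis by (simp add: norm_divide)
  qed
  have inv: "1 / norm (deriv f z) \<le> 1 + D / (1 - r)"
  proof -
    have "1 \<le> norm (deriv f z) + norm (deriv f z - 1)"
      using norm_triangle_ineq4[of "deriv f z" "deriv f z - 1"] by simp
    then have "1 / norm (deriv f z) \<le> (norm (deriv f z) + norm (deriv f z - 1)) / norm (deriv f z)"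
      using Fnz by (intro divide_right_mono) auto
    also have "\<dots> = 1 + norm (deriv f z - 1) / norm (deriv f z)" using Fnz by (simp add: field_simps)
    also have "norm (deriv f z - 1) / norm (deriv f z) \<le> D / (1 - r)"
      using D1 Fpos r1 D0 by (intro frac_le) auto
    finally show ?thesis by simp
  qed
  have M: "3/2 \<le> (real n + 1 + ln (real n - 1) + euler_mascheroni) / 2"
  proof -
    have l0: "ln (real n - 1) \<ge> 0" using n by (intro ln_ge_zero) simp
    have n2: "real n \<ge> 2" using n by simp
    have "real n + 1 + ln (real n - 1) + euler_mascheroni \<ge> 3" using l0 n2 euler_mascheroni_pos by linarith
    then show ?thesis by simp
  qed
  have K: "0 < K" "K \<le> 3/4" using n by (auto simp: K_def field_simps)
  have "norm (deriv (partial_sum f n) z / deriv f z - 1) = norm T * (1 / norm (deriv f z))"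
    by (simp add: eq1)
  also have "\<dots> \<le> (K * r * (u * r^(n-1) / q)) * (1 + D / (1 - r))"
  proof -
    have nn: "0 \<le> K * r * (u * r^(n-1) / q)" using K r0 u0 q0 by simp
    show ?thesis using TB inv nn by (intro mult_mono) auto
  qed
  also have "\<dots> = r^n * (K * (u / q) * (1 + D / (1 - r)))"
  proof -
    have "r * r^(n-1) = r^n" unfolding nm by simp
    then show ?thesis by (simp add: mult_ac)
  qed
  also have "\<dots> \<le> r^n * (K + sqrt (2 * r - r^2) * ((real n + 1 + ln (real n - 1) + euler_mascheroni) / 2) * r / (1 - r)^2)"
    unfolding D_def q_def
    by (intro mult_left_mono final_ineq[OF r0 r1 t0 u0 tu K M]) (use r0 in simp)
  also have "\<dots> = norm z ^ n * ((real n + 1) / (2 * real n)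
              + (sqrt (2 * norm z - norm z ^ 2) / (2 * (1 - norm z))
                  * (real n + 1 + ln (real n - 1) + euler_mascheroni))
                * (norm z / (1 - norm z)))"
  proof -
    define L where "L = real n + 1 + ln (real n - 1) + euler_mascheroni"
    define s where "s = sqrt (2 * r - r^2)"
    have r1': "1 - r \<noteq> 0" using r1 by simp
    have "s * (L / 2) * r / (1 - r)^2 = (s / (2 * (1 - r)) * L) * (r / (1 - r))"
      using r1' by (simp add: power2_eq_square)
    then show ?thesis unfolding r_def[symmetric] K_def L_def[symmetric] s_def[symmetric] by simp
  qed
  finally show ?thesis .
qed

end
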